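(* Let $n_0$ be a positive integer, let $X$ be a semiprime complex Banach algebra with identity, and let $p,q,\theta$ be real numbers with $p<\tfrac32$, $q<\tfrac12$. Suppose $f:X\to X$ satisfies $$\|f(xyx)-f(x)yx-xf(y)x-xyf(x)\|\le\theta\|x\|^p\|y\|^p,$$ $$\|f(2\mu x+\mu y)+f(\mu x+2\mu y)-\mu[f(3x)+f(3y)]\|\le\theta\|x\|^q\|y\|^q$$ for all $x,y\in X$ and all $\mu\in\mathbb{T}^1_{n_0}$. Then $f$ is a linear derivation.
   Context: $\mathbb{T}^1_{n_0}:=\{e^{i\theta}: 0\le\theta\le 2\pi/n_0\}$. An algebra $X$ is semiprime if $aXa=\{0\}$ for some $a\in X$ implies $a=0$. A linear derivation is a $\mathbb{C}$-linear map $D:X\to X$ with $D(xy)=D(x)y+xD(y)$ for all $x,y\in X$. *)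

theory Defs
  imports "HOL-Analysis.Analysis"
begin

text \<open>Complex Banach algebra with identity: a real Banach algebra with a unit
(no normalisation of the norm of the unit is imposed) together with a complex
scalar multiplication extending the real one, making it a complex normed
algebra.\<close>

class complex_banach_algebra_1 = real_normed_algebra + ring_1 + banach +
  fixes scaleC :: "complex \<Rightarrow> 'a \<Rightarrow> 'a" (infixr \<open>*\<^sub>C\<close> 75)
  assumes scaleC_add_right: "c *\<^sub>C (x + y) = c *\<^sub>C x + c *\<^sub>C y"
    and scaleC_add_left: "(b + c) *\<^sub>C x = b *\<^sub>C x + c *\<^sub>C x"
    and scaleC_scaleC: "b *\<^sub>C (c *\<^sub>C x) = (b * c) *\<^sub>C x"
    and scaleC_one: "(1::complex) *\<^sub>C x = x"
    and scaleR_scaleC: "scaleR r x = (complex_of_real r) *\<^sub>C x"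
    and norm_scaleC: "norm (c *\<^sub>C x) = cmod c * norm x"
    and mult_scaleC_left: "(c *\<^sub>C x) * y = c *\<^sub>C (x * y)"
    and mult_scaleC_right: "x * (c *\<^sub>C y) = c *\<^sub>C (x * y)"

definition semiprime_ring :: "'a::ring itself \<Rightarrow> bool" where
  "semiprime_ring _ \<longleftrightarrow> (\<forall>a::'a. (\<forall>x::'a. a * x * a = 0) \<longrightarrow> a = 0)"

definition circle_sector :: "nat \<Rightarrow> complex set" where
  "circle_sector n0 = {cis t | t. 0 \<le> t \<and> t \<le> 2 * pi / real n0}"

definition linear_derivation :: "('a::complex_banach_algebra_1 \<Rightarrow> 'a) \<Rightarrow> bool" where
  "linear_derivation D \<longleftrightarrow>
     (\<forall>x y. D (x + y) = D x + D y) \<and>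
     (\<forall>c x. D (c *\<^sub>C x) = c *\<^sub>C D x) \<and>
     (\<forall>x y. D (x * y) = D x * y + x * D y)"

end

theory Submission
  imports Defs
begin

lemma two_zero: fixes v :: "'a::real_vector" assumes "v + v = 0" shows "v = 0"
proof -
  have "v = (1/2::real) *\<^sub>R (v + v)" by (simp add: scaleR_add_right flip: scaleR_add_left)
  then show ?thesis using assms by simp
qed

lemma semiprime_sym:
  fixes p q :: "'a::{ring, real_vector}"
  assumes sp: "\<And>a::'a. (\<forall>x. a * x * a = 0) \<Longrightarrow> a = 0"
    and I: "\<And>x. p * x * q + q * x * p = 0"
  shows "p * x * q = 0"
proof -
  have "\<forall>y. (p*x*q) * y * (p*x*q) = 0"
  proof
    fix y
    have i1: "q*y*p = -(p*y*q)" using I[of y] by (simp add: eq_neg_iff_add_eq_0 add.commute)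
    have i2: "p*(y*q*x)*q = -(q*(y*q*x)*p)" using I[of "y*q*x"] by (simp add: eq_neg_iff_add_eq_0 add.commute)
    have i3: "q*x*p = -(p*x*q)" using I[of x] by (simp add: eq_neg_iff_add_eq_0 add.commute)
    have "(p*x*q) * y * (p*x*q) = p*x*(q*y*p)*x*q" by (simp add: mult.assoc)
    also have "... = p*x*(-(p*y*q))*x*q" by (simp only: i1)
    also have "... = - ((p*x)*(p*(y*q*x)*q))" by (simp add: mult.assoc)
    also have "... = - ((p*x)*(-(q*(y*q*x)*p)))" by (simp only: i2 minus_minus)
    also have "... = (p*x*q)*y*(q*x*p)" by (simp add: mult.assoc)
    also have "... = (p*x*q)*y*(-(p*x*q))" by (simp only: i3)
    also have "... = - ((p*x*q) * y * (p*x*q))" by simp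
    finally have "(p*x*q) * y * (p*x*q) + (p*x*q) * y * (p*x*q) = 0" by (simp add: eq_neg_iff_add_eq_0 add.commute)
    then show "(p*x*q) * y * (p*x*q) = 0" by (rule two_zero)
  qed
  then show ?thesis by (rule sp)
qed

lemma jordan_triple_der:
  fixes d :: "'a::{ring_1, real_vector} \<Rightarrow> 'a"
  assumes sp: "\<And>a::'a. (\<forall>x. a * x * a = 0) \<Longrightarrow> a = 0"
    and add: "\<And>x y. d (x + y) = d x + d y"
    and J: "\<And>x y. d (x * y * x) = d x * y * x + x * d y * x + x * y * d x"
  shows "d (x * y) = d x * y + x * d y"
proof -
  have d0: "d 0 = 0" using add[of 0 0] by simp
  have dneg: "\<And>x. d (- x) = - d x" using add d0 by (metis add.right_inverse eq_neg_iff_add_eq_0)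
  have ddiff: "\<And>x y. d (x - y) = d x - d y" using add dneg by (metis diff_conv_add_uminus)
  have d1: "d 1 = 0"
  proof -
    have "d 1 = d 1 + d 1 + d 1" using J[of 1 1] by simp
    then have "d 1 + d 1 = 0" by (simp add: add.assoc)
    then show ?thesis by (rule two_zero)
  qed
  have F1: "\<And>x. d (x * x) = d x * x + x * d x" using J[of _ 1] d1 by simp
  have F1': "\<And>x y. d (x*y + y*x) = d x*y + x*d y + d y*x + y*d x"
  proof -
    fix x y :: 'a
    have "(x+y)*(x+y) = x*x + (x*y+y*x) + y*y" by (simp add: algebra_simps)
    then have "d (x*y+y*x) = d ((x+y)*(x+y)) - d (x*x) - d (y*y)" by (simp add: add)
    also have "... = (d x + d y)*(x+y) + (x+y)*(d x + d y) - (d x * x + x * d x) - (d y * y + y * d y)"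
      by (simp only: F1 add)
    also have "... = d x*y + x*d y + d y*x + y*d x" by (simp add: algebra_simps)
    finally show "d (x*y + y*x) = d x*y + x*d y + d y*x + y*d x" .
  qed
  have F4: "\<And>a b c. d (a*b*c + c*b*a) = d a*b*c + a*d b*c + a*b*d c + d c*b*a + c*d b*a + c*b*d a"
  proof -
    fix a b c :: 'a
    have "(a+c)*b*(a+c) = a*b*a + (a*b*c + c*b*a) + c*b*c" by (simp add: algebra_simps)
    then have "d (a*b*c + c*b*a) = d ((a+c)*b*(a+c)) - d (a*b*a) - d (c*b*c)" by (simp add: add)
    also have "... = d (a+c)*b*(a+c) + (a+c)*d b*(a+c) + (a+c)*b*d (a+c)
       - (d a * b * a + a * d b * a + a * b * d a) - (d c * b * c + c * d b * c + c * b * d c)"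
      by (simp only: J)
    also have "... = d a*b*c + a*d b*c + a*b*d c + d c*b*a + c*d b*a + c*b*d a"
      by (simp add: add algebra_simps)
    finally show "d (a*b*c + c*b*a) = d a*b*c + a*d b*c + a*b*d c + d c*b*a + c*d b*a + c*b*d a" .
  qed
  define \<delta> where "\<delta> a b = d (a*b) - d a * b - a * d b" for a b
  have anti: "\<And>a b. \<delta> b a = - \<delta> a b"
    using F1' add unfolding \<delta>_def by (simp add: algebra_simps)
  have dadd1: "\<And>a c b. \<delta> (a+c) b = \<delta> a b + \<delta> c b" unfolding \<delta>_def by (simp add: add algebra_simps)
  have dadd2: "\<And>a b e. \<delta> a (b+e) = \<delta> a b + \<delta> a e" unfolding \<delta>_def by (simp add: add algebra_simps)
  have H1: "\<And>a b x. \<delta> a b * x * (a*b-b*a) + (a*b-b*a) * x * \<delta> a b = 0"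
  proof -
    fix a b x :: 'a
    define u where "u = \<delta> a b"
    have dab: "d (a*b) = u + d a*b + a*d b" unfolding u_def \<delta>_def by simp
    have dba: "d (b*a) = - u + d b*a + b*d a" using anti[of a b] unfolding u_def \<delta>_def
      by (simp add: algebra_simps)
    have e1: "d ((a*b)*x*(b*a) + (b*a)*x*(a*b)) = d (a*b)*x*(b*a) + (a*b)*d x*(b*a) + (a*b)*x*d (b*a)
       + d (b*a)*x*(a*b) + (b*a)*d x*(a*b) + (b*a)*x*d (a*b)" by (rule F4)
    have e2: "(a*b)*x*(b*a) + (b*a)*x*(a*b) = a*(b*x*b)*a + b*(a*x*a)*b" by (simp add: mult.assoc)
    have e3: "d (a*(b*x*b)*a + b*(a*x*a)*b) = d a*(b*x*b)*a + a*(d b*x*b + b*d x*b + b*x*d b)*a + a*(b*x*b)*d a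
       + (d b*(a*x*a)*b + b*(d a*x*a + a*d x*a + a*x*d a)*b + b*(a*x*a)*d b)"
      by (simp add: add J)
    have "0 = (d (a*b)*x*(b*a) + (a*b)*d x*(b*a) + (a*b)*x*d (b*a)
       + d (b*a)*x*(a*b) + (b*a)*d x*(a*b) + (b*a)*x*d (a*b)) - (d a*(b*x*b)*a + a*(d b*x*b + b*d x*b + b*x*d b)*a + a*(b*x*b)*d a
       + (d b*(a*x*a)*b + b*(d a*x*a + a*d x*a + a*x*d a)*b + b*(a*x*a)*d b))"
      using e1 e2 e3 by simp
    also have "... = - (u * x * (a*b-b*a) + (a*b-b*a) * x * u)"
      unfolding dab dba by (simp add: algebra_simps)
    finally show "\<delta> a b * x * (a*b-b*a) + (a*b-b*a) * x * \<delta> a b = 0" unfolding u_def by (metis neg_0_equal_iff_equal)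
  qed
  have M: "\<And>a b x. \<delta> a b * x * (a*b-b*a) = 0" using semiprime_sym[OF sp H1] by blast
  have M': "\<And>a b x. (a*b-b*a) * x * \<delta> a b = 0"
    using semiprime_sym[OF sp, of "a*b-b*a" "\<delta> a b" for a b] H1 by (simp add: add.commute)
  have Q1: "\<And>a b c x. \<delta> a b * x * (c*b-b*c) = 0"
  proof -
    fix a b c x :: 'a
    have "\<delta> (a+c) b * x * ((a+c)*b-b*(a+c)) = 0" by (rule M)
    then have P: "\<delta> a b * x * (c*b-b*c) = - (\<delta> c b * x * (a*b-b*a))"
      using M[of a b x] M[of c b x] unfolding dadd1 by (simp add: algebra_simps eq_neg_iff_add_eq_0)
    show "\<delta> a b * x * (c*b-b*c) = 0"
    proof (rule sp, rule allI)
      fix y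
      have "(\<delta> a b * x * (c*b-b*c)) * y * (\<delta> a b * x * (c*b-b*c))
          = (- (\<delta> c b * x * (a*b-b*a))) * y * (\<delta> a b * x * (c*b-b*c))" by (simp only: P)
      also have "... = - (\<delta> c b * x * ((a*b-b*a) * y * \<delta> a b) * x * (c*b-b*c))" by (simp add: mult.assoc)
      also have "... = 0" by (simp add: M')
      finally show "(\<delta> a b * x * (c*b-b*c)) * y * (\<delta> a b * x * (c*b-b*c)) = 0" .
    qed
  qed
  have Q1': "\<And>a b c x. (c*b-b*c) * x * \<delta> a b = 0"
  proof -
    fix a b c x :: 'a
    have "((a+c)*b-b*(a+c)) * x * \<delta> (a+c) b = 0" by (rule M')
    then have P: "(c*b-b*c) * x * \<delta> a b = - ((a*b-b*a) * x * \<delta> c b)"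
      using M'[of a b x] M'[of c b x] unfolding dadd1 by (simp add: algebra_simps eq_neg_iff_add_eq_0)
    show "(c*b-b*c) * x * \<delta> a b = 0"
    proof (rule sp, rule allI)
      fix y
      have "((c*b-b*c) * x * \<delta> a b) * y * ((c*b-b*c) * x * \<delta> a b)
          = ((c*b-b*c) * x * \<delta> a b) * y * (- ((a*b-b*a) * x * \<delta> c b))" by (simp only: P)
      also have "... = - ((c*b-b*c) * x * (\<delta> a b * y * (a*b-b*a)) * x * \<delta> c b)" by (simp add: mult.assoc)
      also have "... = 0" by (simp add: M)
      finally show "((c*b-b*c) * x * \<delta> a b) * y * ((c*b-b*c) * x * \<delta> a b) = 0" .
    qed
  qed
  have Q2: "\<And>a b c e x. \<delta> a b * x * (c*e-e*c) = 0"
  proof -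
    fix a b c e x :: 'a
    have "\<delta> a (b+e) * x * (c*(b+e)-(b+e)*c) = 0" by (rule Q1)
    then have P: "\<delta> a b * x * (c*e-e*c) = - (\<delta> a e * x * (c*b-b*c))"
      using Q1[of a b x c] Q1[of a e x c] unfolding dadd2 by (simp add: algebra_simps eq_neg_iff_add_eq_0)
    show "\<delta> a b * x * (c*e-e*c) = 0"
    proof (rule sp, rule allI)
      fix y
      have "(\<delta> a b * x * (c*e-e*c)) * y * (\<delta> a b * x * (c*e-e*c))
          = (- (\<delta> a e * x * (c*b-b*c))) * y * (\<delta> a b * x * (c*e-e*c))" by (simp only: P)
      also have "... = - (\<delta> a e * x * ((c*b-b*c) * y * \<delta> a b) * x * (c*e-e*c))" by (simp add: mult.assoc)
      also have "... = 0" by (simp add: Q1')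
      finally show "(\<delta> a b * x * (c*e-e*c)) * y * (\<delta> a b * x * (c*e-e*c)) = 0" .
    qed
  qed
  have Q2': "\<And>a b c e x. (c*e-e*c) * x * \<delta> a b = 0"
  proof -
    fix a b c e x :: 'a
    have "(c*(b+e)-(b+e)*c) * x * \<delta> a (b+e) = 0" by (rule Q1')
    then have P: "(c*e-e*c) * x * \<delta> a b = - ((c*b-b*c) * x * \<delta> a e)"
      using Q1'[where a=a and b=b and c=c and x=x] Q1'[where a=a and b=e and c=c and x=x] unfolding dadd2 by (simp add: algebra_simps eq_neg_iff_add_eq_0)
    show "(c*e-e*c) * x * \<delta> a b = 0"
    proof (rule sp, rule allI)
      fix y
      have "((c*e-e*c) * x * \<delta> a b) * y * ((c*e-e*c) * x * \<delta> a b)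
          = ((c*e-e*c) * x * \<delta> a b) * y * (- ((c*b-b*c) * x * \<delta> a e))" by (simp only: P)
      also have "... = - ((c*e-e*c) * x * (\<delta> a b * y * (c*b-b*c)) * x * \<delta> a e)" by (simp add: mult.assoc)
      also have "... = 0" by (simp add: Q1)
      finally show "((c*e-e*c) * x * \<delta> a b) * y * ((c*e-e*c) * x * \<delta> a b) = 0" .
    qed
  qed
  have fin: "\<And>a b. \<delta> a b = 0"
  proof -
    fix a b :: 'a
    define u where "u = \<delta> a b"
    define c where "c = a*b - b*a"
    have central: "\<And>r. u*r = r*u"
    proof -
      fix r
      have "u*r - r*u = 0"
      proof (rule sp, rule allI)
        fix y
        have "(u*r - r*u) * y * (u*r - r*u) = u*(r*y)*(u*r - r*u) - r*(u*y*(u*r-r*u))"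
          by (simp add: algebra_simps)
        also have "... = 0" using Q2[where a=a and b=b and c=u and e=r and x="r*y"]
            Q2[where a=a and b=b and c=u and e=r and x="y"] unfolding u_def by (simp add: mult.assoc)
        finally show "(u*r - r*u) * y * (u*r - r*u) = 0" .
      qed
      then show "u*r = r*u" by simp
    qed
    have uc: "u*c = 0" using Q2[where a=a and b=b and c=a and e=b and x=1] unfolding u_def c_def by simp
    have cu: "c*u = 0" using Q2'[where a=a and b=b and c=a and e=b and x=1] unfolding u_def c_def by simp
    have dba: "d (b*a) = - u + d b*a + b*d a" using anti[of a b] unfolding u_def \<delta>_def
      by (simp add: algebra_simps)
    have two_u: "u + u = d c - (d a*b - b*d a) - (a*d b - d b*a)"
      unfolding c_def ddiff dba by (simp add: u_def \<delta>_def algebra_simps)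
    have z1: "u * (d a*b - b*d a) = 0" using Q2[where a=a and b=b and c="d a" and e=b and x=1] unfolding u_def by simp
    have z2: "u * (a*d b - d b*a) = 0" using Q2[where a=a and b=b and c=a and e="d b" and x=1] unfolding u_def by simp
    have uu: "u*(u+u) = u * d c"
    proof -
      have "u*(u+u) = u * d c - u*(d a*b - b*d a) - u*(a*d b - d b*a)" unfolding two_u by (simp add: algebra_simps)
      then show ?thesis using z1 z2 by simp
    qed
    have lin: "d u * c + u * d c + d c * u + c * d u = 0"
      using F1'[of u c] uc cu d0 by simp
    have "u * (d u * c + u * d c + d c * u + c * d u) = 0" using lin by simp
    moreover have "u * (d u * c) = 0" using Q2[where a=a and b=b and c=a and e=b and x="d u"] unfolding u_def c_def by (simp add: mult.assoc)
    moreover have "u * (c * d u) = 0" using uc by (simp flip: mult.assoc)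
    moreover have "u * (d c * u) = u * (u * d c)" using central[of "d c"] by simp
    ultimately have "u * (u * d c) + u * (u * d c) = 0" by (simp add: algebra_simps)
    then have uudc: "u * (u * d c) = 0" by (rule two_zero)
    have "u*(u*(u+u)) = 0" using uu uudc by simp
    then have "u*u*u + u*u*u = 0" by (simp add: algebra_simps)
    then have uuu: "u*u*u = 0" by (rule two_zero)
    have uu0: "u*u = 0"
    proof (rule sp, rule allI)
      fix y
      have "(u*u)*y*(u*u) = u*u*(y*u)*u" by (simp add: mult.assoc)
      also have "... = u*u*(u*y)*u" by (simp only: central[of y])
      also have "... = (u*u*u)*(y*u)" by (simp add: mult.assoc)
      finally have "(u*u)*y*(u*u) = (u*u*u)*(y*u)" .
      then show "(u*u)*y*(u*u) = 0" using uuu by simp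
    qed
    show "\<delta> a b = 0" unfolding u_def[symmetric]
    proof (rule sp, rule allI)
      fix y
      have "u*y*u = u*(y*u)" by (simp add: mult.assoc)
      also have "... = u*(u*y)" by (simp only: central[of y])
      also have "... = (u*u)*y" by (simp add: mult.assoc)
      finally have "u*y*u = (u*u)*y" .
      then show "u*y*u = 0" using uu0 by simp
    qed
  qed
  show ?thesis using fin[of x y] unfolding \<delta>_def by (simp add: algebra_simps)
qed

lemma comb1: "x + c *\<^sub>R x = (1 + c) *\<^sub>R (x::'a::real_vector)" by (simp add: scaleR_add_left)
lemma comb2: "c *\<^sub>R x + d *\<^sub>R x = (c + d) *\<^sub>R (x::'a::real_vector)" by (simp add: scaleR_add_left)
lemma comb3: "c *\<^sub>R x + x = (c + 1) *\<^sub>R (x::'a::real_vector)" by (simp add: scaleR_add_left)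

lemma pw2: "(1/2^n) * ((2::real)^n) powr s = (2 powr (s-1))^n"
proof -
  have a: "(2::real)^n = 2 powr (real n)" by (simp add: powr_realpow)
  have "(1/2^n) * ((2::real)^n) powr s = 2 powr (- real n) * 2 powr (real n * s)"
    unfolding a by (simp add: powr_powr powr_minus divide_inverse)
  also have "... = 2 powr (real n * (s - 1))" by (simp add: powr_add[symmetric] algebra_simps)
  also have "... = (2 powr (s-1))^n" by (simp add: powr_power)
  finally show ?thesis .
qed

lemma norm_scale_powr: "norm (c *\<^sub>R x) powr q = \<bar>c\<bar> powr q * norm (x::'a::real_normed_vector) powr q"
  by (simp add: powr_mult)

lemma geom_conv:
  fixes s :: "nat \<Rightarrow> 'a::banach"
  assumes st: "\<And>n. norm (s (Suc n) - s n) \<le> C * r^n" and r: "0 \<le> r" "r < 1"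
  shows "\<exists>L. s \<longlonglongrightarrow> L \<and> norm (s 0 - L) \<le> C / (1 - r)"
proof -
  have sg: "summable (\<lambda>n. C * r^n)" using r by (intro summable_mult summable_geometric) simp
  have sd: "summable (\<lambda>n. s (Suc n) - s n)"
    by (rule summable_comparison_test'[OF sg]) (use st in auto)
  have "(\<lambda>n. \<Sum>i<n. s (Suc i) - s i) \<longlonglongrightarrow> suminf (\<lambda>n. s (Suc n) - s n)"
    by (rule summable_LIMSEQ[OF sd])
  then have "(\<lambda>n. s n - s 0) \<longlonglongrightarrow> suminf (\<lambda>n. s (Suc n) - s n)"
    by (simp add: sum_lessThan_telescope)
  then have "(\<lambda>n. (s n - s 0) + s 0) \<longlonglongrightarrow> suminf (\<lambda>n. s (Suc n) - s n) + s 0"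
    by (intro tendsto_intros)
  then have lim: "s \<longlonglongrightarrow> suminf (\<lambda>n. s (Suc n) - s n) + s 0" by simp
  have "norm (suminf (\<lambda>n. s (Suc n) - s n)) \<le> suminf (\<lambda>n. C * r^n)"
    by (rule norm_suminf_le[OF st sg])
  also have "... = C / (1 - r)" using r by (simp add: suminf_mult suminf_geometric)
  finally show ?thesis using lim by (intro exI[of _ "suminf (\<lambda>n. s (Suc n) - s n) + s 0"]) simp
qed

lemma lim_le4:
  fixes c e e1 e2 e3 e4 b1 b2 b3 b4 :: real
  assumes "e1 < e" "e2 < e" "e3 < e" "e4 < e"
    and H: "\<And>n::nat. n \<ge> 1 \<Longrightarrow> real n powr e * c \<le> b1 * real n powr e1 + b2 * real n powr e2 + b3 * real n powr e3 + b4 * real n powr e4"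
  shows "c \<le> 0"
proof -
  have ev: "eventually (\<lambda>n. c \<le> b1 * real n powr (e1-e) + b2 * real n powr (e2-e) + b3 * real n powr (e3-e) + b4 * real n powr (e4-e)) sequentially"
    using eventually_ge_at_top[of 1]
  proof eventually_elim
    case (elim n)
    have pos: "real n powr e > 0" using elim by simp
    have "real n powr e * c \<le> real n powr e * (b1 * real n powr (e1-e) + b2 * real n powr (e2-e) + b3 * real n powr (e3-e) + b4 * real n powr (e4-e))"
      using H[OF elim] pos by (simp add: powr_diff algebra_simps)
    then show ?case using pos by (simp add: mult_le_cancel_left_pos)
  qed
  have lim: "(\<lambda>n. b1 * real n powr (e1-e) + b2 * real n powr (e2-e) + b3 * real n powr (e3-e) + b4 * real n powr (e4-e)) \<longlonglongrightarrow> b1*0 + b2*0 + b3*0 + b4*0"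
    using assms(1-4) by (intro tendsto_intros tendsto_neg_powr filterlim_real_sequentially) auto
  show ?thesis using tendsto_le[OF trivial_limit_sequentially lim tendsto_const ev] by simp
qed
lemma HU:
  fixes f :: "'a::banach \<Rightarrow> 'a" and T q :: real
  assumes q: "q < 1/2" and T: "0 \<le> T" and f0: "f 0 = 0"
    and E: "\<And>x y. norm (f (2 *\<^sub>R x + y) + f (x + 2 *\<^sub>R y) - f (3 *\<^sub>R x) - f (3 *\<^sub>R y))
              \<le> T * norm x powr q * norm y powr q"
  shows "\<exists>A K. (\<forall>x y. A (x + y) = A x + A y) \<and> 0 \<le> K \<and> (\<forall>x. norm (f x - A x) \<le> K * norm x powr (2*q))"
proof -
  define c1 where "c1 = (2/3::real) powr q * (1/3) powr q"
  have c1: "0 \<le> c1" unfolding c1_def by simp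
  have Dest: "norm (f (2 *\<^sub>R w) - f w + f (-w)) \<le> T*c1 * norm w powr (2*q)" for w
  proof -
    have i1: "2 *\<^sub>R ((2/3) *\<^sub>R w) + -((1/3) *\<^sub>R w) = w"
      by (simp add: algebra_simps) (simp add: comb1 comb2 comb3)
    have i2: "(2/3) *\<^sub>R w + 2 *\<^sub>R (-((1/3) *\<^sub>R w)) = 0" by (simp add: algebra_simps)
    have i3: "3 *\<^sub>R ((2/3) *\<^sub>R w) = 2 *\<^sub>R w" by simp
    have i4: "3 *\<^sub>R (-((1/3) *\<^sub>R w)) = - w" by simp
    have "norm (f w + f 0 - f (2 *\<^sub>R w) - f (-w)) \<le> T * norm ((2/3) *\<^sub>R w) powr q * norm (-((1/3) *\<^sub>R w)) powr q"
      using E[of "(2/3) *\<^sub>R w" "-((1/3) *\<^sub>R w)"] unfolding i1 i2 i3 i4 .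
    also have "... = T*c1 * (norm w powr q * norm w powr q)"
      unfolding norm_minus_cancel norm_scale_powr c1_def by simp
    also have "... = T*c1 * norm w powr (2*q)" by (simp add: powr_add[symmetric])
    finally show ?thesis using f0 by (simp add: norm_minus_commute[of "f w"] algebra_simps)
  qed
  define K1 where "K1 = T*c1*(1 + 2*(1/2) powr (2*q))"
  have K1: "0 \<le> K1" unfolding K1_def using T c1 by simp
  have Kest: "norm (f (2 *\<^sub>R w) - 2 *\<^sub>R f w) \<le> K1 * norm w powr (2*q)" for w
  proof -
    define v where "v = (1/2::real) *\<^sub>R w"
    have v1: "2 *\<^sub>R v = w" "2 *\<^sub>R (-v) = -w" "- (-v) = v" unfolding v_def by simp_all
    have eq: "f (2 *\<^sub>R w) - 2 *\<^sub>R f w = (f (2 *\<^sub>R w) - f w + f (-w)) - (f (2 *\<^sub>R v) - f v + f (-v))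
        - (f (2 *\<^sub>R (-v)) - f (-v) + f (- (-v)))"
      unfolding v1 by (simp add: algebra_simps scaleR_2)
    have "norm (f (2 *\<^sub>R w) - 2 *\<^sub>R f w) \<le> norm (f (2 *\<^sub>R w) - f w + f (-w)) + norm (f (2 *\<^sub>R v) - f v + f (-v))
        + norm (f (2 *\<^sub>R (-v)) - f (-v) + f (- (-v)))"
      unfolding eq by (rule order_trans[OF norm_triangle_ineq4] add_mono)+ (rule order_refl)+
    also have "... \<le> T*c1 * norm w powr (2*q) + T*c1 * norm v powr (2*q) + T*c1 * norm (-v) powr (2*q)"
      by (intro add_mono Dest)
    also have "... = K1 * norm w powr (2*q)"
      unfolding K1_def v_def norm_minus_cancel norm_scale_powr by (simp add: algebra_simps)
    finally show ?thesis .
  qed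
  define a where "a n x = (1/2^n::real) *\<^sub>R f ((2^n::real) *\<^sub>R x)" for n x
  define r where "r = (2::real) powr (2*q - 1)"
  have r: "0 \<le> r" "r < 1" unfolding r_def using q by (auto intro!: powr_less_one)
  have step: "norm (a (Suc n) x - a n x) \<le> (K1/2 * norm x powr (2*q)) * r^n" for n x
  proof -
    define X where "X = (2^n::real) *\<^sub>R x"
    have "a (Suc n) x - a n x = (1/2^(Suc n)::real) *\<^sub>R (f (2 *\<^sub>R X) - 2 *\<^sub>R f X)"
      unfolding a_def X_def by (simp add: algebra_simps)
    then have "norm (a (Suc n) x - a n x) = (1/2^(Suc n)) * norm (f (2 *\<^sub>R X) - 2 *\<^sub>R f X)" by simp
    also have "... \<le> (1/2^(Suc n)) * (K1 * norm X powr (2*q))" by (intro mult_left_mono Kest) simp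
    also have "... = K1/2 * norm x powr (2*q) * ((1/2^n) * ((2::real)^n) powr (2*q))"
      unfolding X_def norm_scale_powr by simp
    also have "... = (K1/2 * norm x powr (2*q)) * r^n" unfolding pw2 r_def by simp
    finally show ?thesis .
  qed
  have ex: "\<exists>L. (\<lambda>n. a n x) \<longlonglongrightarrow> L \<and> norm (a 0 x - L) \<le> (K1/2 * norm x powr (2*q)) / (1 - r)" for x
    by (rule geom_conv[OF step r])
  define A where "A x = lim (\<lambda>n. a n x)" for x
  have conv: "(\<lambda>n. a n x) \<longlonglongrightarrow> A x" for x
    using ex[of x] unfolding A_def by (metis limI)
  have bnd: "norm (f x - A x) \<le> (K1/2/(1-r)) * norm x powr (2*q)" for x
  proof -
    obtain L where L: "(\<lambda>n. a n x) \<longlonglongrightarrow> L" "norm (a 0 x - L) \<le> (K1/2 * norm x powr (2*q)) / (1 - r)"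
      using ex[of x] by blast
    have "L = A x" using LIMSEQ_unique[OF L(1) conv] .
    then show ?thesis using L(2) unfolding a_def by simp
  qed
  have A0: "A 0 = 0"
  proof -
    have "(\<lambda>n. a n 0) = (\<lambda>n. 0)" unfolding a_def using f0 by simp
    then show ?thesis using LIMSEQ_unique[OF conv[of 0]] by (metis tendsto_const)
  qed
  have A2: "A (2 *\<^sub>R x) = 2 *\<^sub>R A x" for x
  proof -
    have "(\<lambda>n. a n (2 *\<^sub>R x)) = (\<lambda>n. 2 *\<^sub>R a (Suc n) x)" unfolding a_def by (simp add: mult.commute)
    moreover have "(\<lambda>n. 2 *\<^sub>R a (Suc n) x) \<longlonglongrightarrow> 2 *\<^sub>R A x"
      by (intro tendsto_intros LIMSEQ_Suc conv)
    ultimately show ?thesis using LIMSEQ_unique[OF conv[of "2 *\<^sub>R x"]] by metis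
  qed
  have E0: "A (2 *\<^sub>R x + y) + A (x + 2 *\<^sub>R y) - A (3 *\<^sub>R x) - A (3 *\<^sub>R y) = 0" for x y
  proof -
    define b where "b n = a n (2 *\<^sub>R x + y) + a n (x + 2 *\<^sub>R y) - a n (3 *\<^sub>R x) - a n (3 *\<^sub>R y)" for n
    have l1: "b \<longlonglongrightarrow> A (2 *\<^sub>R x + y) + A (x + 2 *\<^sub>R y) - A (3 *\<^sub>R x) - A (3 *\<^sub>R y)"
      unfolding b_def by (intro tendsto_intros conv)
    have nb: "norm (b n) \<le> (T * norm x powr q * norm y powr q) * r^n" for n
    proof -
      define X where "X = (2^n::real) *\<^sub>R x"
      define Y where "Y = (2^n::real) *\<^sub>R y"
      have "b n = (1/2^n::real) *\<^sub>R (f (2 *\<^sub>R X + Y) + f (X + 2 *\<^sub>R Y) - f (3 *\<^sub>R X) - f (3 *\<^sub>R Y))"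
        unfolding b_def a_def X_def Y_def by (simp add: algebra_simps)
      then have "norm (b n) = (1/2^n) * norm (f (2 *\<^sub>R X + Y) + f (X + 2 *\<^sub>R Y) - f (3 *\<^sub>R X) - f (3 *\<^sub>R Y))"
        by simp
      also have "... \<le> (1/2^n) * (T * norm X powr q * norm Y powr q)" by (intro mult_left_mono E) simp
      also have "... = (T * norm x powr q * norm y powr q) * ((1/2^n) * ((2::real)^n) powr (2*q))"
        unfolding X_def Y_def norm_scale_powr by (simp add: powr_add[symmetric] algebra_simps)
      also have "... = (T * norm x powr q * norm y powr q) * r^n" unfolding pw2 r_def by simp
      finally show ?thesis .
    qed
    have l2: "b \<longlonglongrightarrow> 0"
    proof (rule Lim_null_comparison[OF always_eventually])
      show "\<forall>n. norm (b n) \<le> (T * norm x powr q * norm y powr q) * r^n" using nb by blast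
      show "(\<lambda>n. (T * norm x powr q * norm y powr q) * r^n) \<longlonglongrightarrow> 0"
        using r by (auto intro!: tendsto_eq_intros LIMSEQ_power_zero)
    qed
    show ?thesis using LIMSEQ_unique[OF l1 l2] .
  qed
  have A3: "A (3 *\<^sub>R x) = 3 *\<^sub>R A x" for x
    using E0[of x 0] A0 A2[of x] by (simp add: algebra_simps) (simp add: comb1 comb2 comb3)
  have Aneg: "A (- w) = - A w" for w
  proof -
    have i1: "2 *\<^sub>R ((2/3) *\<^sub>R w) + -((1/3) *\<^sub>R w) = w"
      by (simp add: algebra_simps) (simp add: comb1 comb2 comb3)
    have i2: "(2/3) *\<^sub>R w + 2 *\<^sub>R (-((1/3) *\<^sub>R w)) = 0" by (simp add: algebra_simps)
    have i3: "3 *\<^sub>R ((2/3) *\<^sub>R w) = 2 *\<^sub>R w" by simp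
    have i4: "3 *\<^sub>R (-((1/3) *\<^sub>R w)) = - w" by simp
    have "A w + A 0 - A (2 *\<^sub>R w) - A (- w) = 0"
      using E0[of "(2/3) *\<^sub>R w" "-((1/3) *\<^sub>R w)"] unfolding i1 i2 i3 i4 .
    then have "A (-w) = A w + A 0 - A (2 *\<^sub>R w)" by (simp add: diff_eq_eq)
    also have "... = - A w" unfolding A0 A2 by (simp add: scaleR_2)
    finally show ?thesis .
  qed
  have Aadd: "A (s + t) = A s + A t" for s t
  proof -
    define z where "z = (1/2::real) *\<^sub>R s"
    have s: "s = 2 *\<^sub>R z" unfolding z_def by simp
    have e1: "A (2 *\<^sub>R z + t) + A (z + 2 *\<^sub>R t) = 3 *\<^sub>R A z + 3 *\<^sub>R A t"
      using E0[of z t] A3 by (simp add: algebra_simps)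
    have j1: "2 *\<^sub>R ((1/3) *\<^sub>R (2 *\<^sub>R z + t)) + -((1/3) *\<^sub>R (z + 2 *\<^sub>R t)) = z"
      by (simp add: algebra_simps) (simp add: comb1 comb2 comb3)
    have j2: "(1/3) *\<^sub>R (2 *\<^sub>R z + t) + 2 *\<^sub>R (-((1/3) *\<^sub>R (z + 2 *\<^sub>R t))) = - t"
      by (simp add: algebra_simps) (simp add: comb1 comb2 comb3)
    have j3: "3 *\<^sub>R ((1/3) *\<^sub>R (2 *\<^sub>R z + t)) = 2 *\<^sub>R z + t" by simp
    have j4: "3 *\<^sub>R (-((1/3) *\<^sub>R (z + 2 *\<^sub>R t))) = - (z + 2 *\<^sub>R t)" by simp
    have e2: "A z + A (-t) - A (2 *\<^sub>R z + t) - A (- (z + 2 *\<^sub>R t)) = 0"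
      using E0[of "(1/3) *\<^sub>R (2 *\<^sub>R z + t)" "-((1/3) *\<^sub>R (z + 2 *\<^sub>R t))"] unfolding j1 j2 j3 j4 .
    have s3: "(3::real) *\<^sub>R v = v + v + v" for v :: 'a
    proof -
      have "(3::real) *\<^sub>R v = (1 + 1 + 1) *\<^sub>R v" by simp
      also have "... = v + v + v" by (simp only: scaleR_add_left scaleR_one)
      finally show ?thesis .
    qed
    have "A (2 *\<^sub>R z + t) - (2 *\<^sub>R A z + A t) + (A (2 *\<^sub>R z + t) - (2 *\<^sub>R A z + A t))
       = (A (2 *\<^sub>R z + t) + A (z + 2 *\<^sub>R t) - (3 *\<^sub>R A z + 3 *\<^sub>R A t))
         - (A z + A (-t) - A (2 *\<^sub>R z + t) - A (- (z + 2 *\<^sub>R t)))"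
      unfolding Aneg s3 scaleR_2 by (simp add: algebra_simps)
    also have "... = 0" using e1 e2 by simp
    finally have "A (2 *\<^sub>R z + t) - (2 *\<^sub>R A z + A t) + (A (2 *\<^sub>R z + t) - (2 *\<^sub>R A z + A t)) = 0" .
    then have "A (2 *\<^sub>R z + t) - (2 *\<^sub>R A z + A t) = 0" by (rule two_zero)
    then show ?thesis unfolding s A2 by simp
  qed
  show ?thesis
    by (rule exI[of _ A], rule exI[of _ "K1/2/(1-r)"]) (use Aadd bnd K1 r in auto)
qed

lemma scaleC_zero_right: "c *\<^sub>C (0::'a::complex_banach_algebra_1) = 0"
proof -
  have "c *\<^sub>C (0::'a) = c *\<^sub>C 0 + c *\<^sub>C 0" using scaleC_add_right[of c "0::'a" 0] by simp
  then show ?thesis by simp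
qed

lemma scaleC_num: "(numeral k :: complex) *\<^sub>C (x::'a::complex_banach_algebra_1) = numeral k *\<^sub>R x"
  by (metis of_real_numeral scaleR_scaleC)

lemma scaleC_of_nat: "(of_nat m :: complex) *\<^sub>C (x::'a::complex_banach_algebra_1) = of_nat m *\<^sub>R x"
  by (metis of_real_of_nat_eq scaleR_scaleC)

lemma circle_sector_one: "n0 > 0 \<Longrightarrow> 1 \<in> circle_sector n0"
  unfolding circle_sector_def by (rule CollectI, rule exI[of _ 0]) simp

lemma circle_sector_cis: "0 \<le> t \<Longrightarrow> t \<le> 2 * pi / real n0 \<Longrightarrow> cis t \<in> circle_sector n0"
  unfolding circle_sector_def by blast

lemma setup_E:
  fixes f :: "'a::complex_banach_algebra_1 \<Rightarrow> 'a"
  assumes n0: "n0 > 0"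
    and H: "\<And>x y \<mu>. \<mu> \<in> circle_sector n0 \<Longrightarrow>
           norm (f ((2 * \<mu>) *\<^sub>C x + \<mu> *\<^sub>C y) + f (\<mu> *\<^sub>C x + (2 * \<mu>) *\<^sub>C y)
                 - \<mu> *\<^sub>C (f (3 *\<^sub>C x) + f (3 *\<^sub>C y)))
             \<le> \<theta> * norm x powr q * norm y powr q"
  shows "norm (f (2 *\<^sub>R x + y) + f (x + 2 *\<^sub>R y) - f (3 *\<^sub>R x) - f (3 *\<^sub>R y)) \<le> \<bar>\<theta>\<bar> * norm x powr q * norm y powr q"
proof -
  have "norm (f (2 *\<^sub>R x + y) + f (x + 2 *\<^sub>R y) - f (3 *\<^sub>R x) - f (3 *\<^sub>R y)) \<le> \<theta> * norm x powr q * norm y powr q"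
    using H[OF circle_sector_one[OF n0], of x y] by (simp add: scaleC_one scaleC_num diff_diff_add)
  also have "... \<le> \<bar>\<theta>\<bar> * norm x powr q * norm y powr q"
    by (intro mult_right_mono) auto
  finally show ?thesis .
qed

lemma norm5: "norm (a - b + c + d + e) \<le> norm a + norm b + norm c + norm (d::'a::real_normed_vector) + norm e"
  using norm_triangle_ineq[of "a-b+c+d" e] norm_triangle_ineq[of "a-b+c" d] norm_triangle_ineq[of "a-b" c]
    norm_triangle_ineq4[of a b] by linarith

lemma norm4: "norm (a - b - c - d) \<le> norm a + norm b + norm c + norm (d::'a::real_normed_vector)"
  using norm_triangle_ineq4[of "a-b-c" d] norm_triangle_ineq4[of "a-b" c]
    norm_triangle_ineq4[of a b] by linarith

lemma prod3_le:
  fixes a b c :: "'a::real_normed_algebra"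
  assumes "norm a \<le> \<alpha>" "norm b \<le> \<beta>" "norm c \<le> \<gamma>"
  shows "norm (a*b*c) \<le> \<alpha>*\<beta>*\<gamma>"
proof -
  have "norm (a*b*c) \<le> norm a * norm b * norm c"
    by (metis norm_mult_ineq mult_right_mono norm_ge_zero order_trans)
  also have "... \<le> \<alpha>*\<beta>*\<gamma>"
  proof -
    have a0: "0 \<le> \<alpha>" "0 \<le> \<beta>" using assms norm_ge_zero order_trans by blast+
    have "norm a * norm b \<le> \<alpha>*\<beta>" using assms a0 by (intro mult_mono) auto
    then show ?thesis using assms a0 by (intro mult_mono) auto
  qed
  finally show ?thesis .
qed

lemma stage2:
  fixes f A :: "'a::complex_banach_algebra_1 \<Rightarrow> 'a"
  assumes p: "p < 3/2" and q: "q < 1/2" and Th: "0 \<le> Th" and K: "0 \<le> K"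
    and J: "\<And>x y. norm (f (x*y*x) - f x*y*x - x*f y*x - x*y*f x) \<le> Th * norm x powr p * norm y powr p"
    and Aadd: "\<And>x y. A (x+y) = A x + A y"
    and hb: "\<And>x. norm (f x - A x) \<le> K * norm x powr (2*q)"
  shows "f = A \<and> (\<forall>x y. A (x*y*x) - A x*y*x - x*A y*x - x*y*A x = 0)"
proof -
  have A0: "A 0 = 0" using Aadd[of 0 0] by simp
  have Anat: "A (real n *\<^sub>R z) = real n *\<^sub>R A z" for n z
    by (induction n) (simp_all add: A0 Aadd scaleR_add_left)
  have hbt: "norm (f (t *\<^sub>R z) - A (t *\<^sub>R z)) \<le> K * t powr (2*q) * norm z powr (2*q)" if "t \<ge> 0" for t z
    using hb[of "t *\<^sub>R z"] that unfolding norm_scale_powr by (simp add: mult.assoc)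
  define JA where "JA x y = A (x*y*x) - A x*y*x - x*A y*x - x*y*A x" for x y
  have JA0: "JA x y = 0" for x y
  proof -
    define b1 where "b1 = Th * norm x powr p * norm y powr p"
    define b2 where "b2 = K * norm (x*y*x) powr (2*q)"
    define b3 where "b3 = K * (norm x powr (2*q) * norm y * norm x + norm x * norm y powr (2*q) * norm x
                          + norm x * norm y * norm x powr (2*q))"
    have "norm (JA x y) \<le> 0"
    proof (rule lim_le4[of "2*p" 3 "6*q" "2*q+2" 0 "norm (JA x y)" b1 b2 b3 0])
      show "2*p < 3" "6*q < 3" "2*q+2 < 3" "(0::real) < 3" using p q by auto
      fix n :: nat assume n: "n \<ge> 1"
      define t where "t = real n"
      have t: "t > 0" "t \<ge> 1" using n unfolding t_def by auto
      define X where "X = t *\<^sub>R x"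
      define Y where "Y = t *\<^sub>R y"
      have XYX: "X*Y*X = (t*t*t) *\<^sub>R (x*y*x)" unfolding X_def Y_def by (simp add: mult.assoc)
      have ttt: "t*t*t = real (n*n*n)" unfolding t_def by simp
      have AX: "A X = t *\<^sub>R A x" "A Y = t *\<^sub>R A y" unfolding X_def Y_def t_def by (rule Anat)+
      have AXYX: "A (X*Y*X) = (t*t*t) *\<^sub>R A (x*y*x)" unfolding XYX ttt by (rule Anat)
      have JAs: "JA X Y = (t*t*t) *\<^sub>R JA x y"
        unfolding JA_def AXYX AX unfolding X_def Y_def by (simp add: algebra_simps)
      have dec: "JA X Y = (f (X*Y*X) - f X*Y*X - X*f Y*X - X*Y*f X) - (f (X*Y*X) - A (X*Y*X))
          + (f X - A X)*Y*X + X*(f Y - A Y)*X + X*Y*(f X - A X)"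
        unfolding JA_def by (simp add: algebra_simps)
      have nX: "norm X = t * norm x" "norm Y = t * norm y" unfolding X_def Y_def using t by auto
      have hX: "norm (f X - A X) \<le> K * t powr (2*q) * norm x powr (2*q)" unfolding X_def using t by (intro hbt) auto
      have hY: "norm (f Y - A Y) \<le> K * t powr (2*q) * norm y powr (2*q)" unfolding Y_def using t by (intro hbt) auto
      have B1: "norm (f (X*Y*X) - f X*Y*X - X*f Y*X - X*Y*f X) \<le> b1 * t powr (2*p)"
      proof -
        have "norm (f (X*Y*X) - f X*Y*X - X*f Y*X - X*Y*f X) \<le> Th * norm X powr p * norm Y powr p" by (rule J)
        also have "... = b1 * (t powr p * t powr p)" unfolding X_def Y_def norm_scale_powr b1_def using t by simp
        also have "... = b1 * t powr (2*p)" by (simp only: mult_2 powr_add)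
        finally show ?thesis .
      qed
      have B2: "norm (f (X*Y*X) - A (X*Y*X)) \<le> b2 * t powr (6*q)"
      proof -
        have "norm (f (X*Y*X) - A (X*Y*X)) \<le> K * (t*t*t) powr (2*q) * norm (x*y*x) powr (2*q)"
          unfolding XYX using t by (intro hbt) auto
        also have "(t*t*t) powr (2*q) = t powr (6*q)"
        proof -
          have "(6::real)*q = 2*q + 2*q + 2*q" by simp
          then show ?thesis using t by (simp only: powr_mult powr_add)
        qed
        finally show ?thesis unfolding b2_def by (simp add: algebra_simps)
      qed
      have tt: "t powr (2*q) * t * t = t powr (2*q+2)"
        using t by (simp only: powr_add) (simp add: powr_numeral power2_eq_square mult.assoc)
      have B3: "norm ((f X - A X)*Y*X) + norm (X*(f Y - A Y)*X) + norm (X*Y*(f X - A X)) \<le> b3 * t powr (2*q+2)"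
      proof -
        have "norm ((f X - A X)*Y*X) \<le> (K * t powr (2*q) * norm x powr (2*q)) * (t * norm y) * (t * norm x)"
          using hX nX by (intro prod3_le) auto
        moreover have "norm (X*(f Y - A Y)*X) \<le> (t * norm x) * (K * t powr (2*q) * norm y powr (2*q)) * (t * norm x)"
          using hY nX by (intro prod3_le) auto
        moreover have "norm (X*Y*(f X - A X)) \<le> (t * norm x) * (t * norm y) * (K * t powr (2*q) * norm x powr (2*q))"
          using hX nX by (intro prod3_le) auto
        moreover have "(K * t powr (2*q) * norm x powr (2*q)) * (t * norm y) * (t * norm x)
            + (t * norm x) * (K * t powr (2*q) * norm y powr (2*q)) * (t * norm x)
            + (t * norm x) * (t * norm y) * (K * t powr (2*q) * norm x powr (2*q)) = b3 * (t powr (2*q) * t * t)"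
          unfolding b3_def by (simp add: algebra_simps)
        ultimately show ?thesis unfolding tt by linarith
      qed
      have "norm (JA X Y) \<le> b1 * t powr (2*p) + b2 * t powr (6*q) + b3 * t powr (2*q+2)"
        using norm5[of "f (X*Y*X) - f X*Y*X - X*f Y*X - X*Y*f X" "f (X*Y*X) - A (X*Y*X)"
            "(f X - A X)*Y*X" "X*(f Y - A Y)*X" "X*Y*(f X - A X)"] B1 B2 B3 unfolding dec[symmetric] by linarith
      moreover have "norm (JA X Y) = t powr 3 * norm (JA x y)" unfolding JAs using t
        by (simp add: powr_numeral power3_eq_cube)
      ultimately show "real n powr 3 * norm (JA x y) \<le> b1 * real n powr (2*p) + b2 * real n powr (6*q)
          + b3 * real n powr (2*q+2) + 0 * real n powr 0" unfolding t_def by simp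
    qed
    then show ?thesis by simp
  qed
  have hz: "f y = A y" for y
  proof -
    define b1 where "b1 = Th * norm (1::'a) powr p * norm y powr p"
    define b2 where "b2 = K * norm y powr (2*q)"
    define b3 where "b3 = 2 * (K * norm (1::'a) powr (2*q) * norm y * norm (1::'a))"
    have "norm (f y - A y) \<le> 0"
    proof (rule lim_le4[of p 2 "4*q" "2*q+1" 0 "norm (f y - A y)" b1 b2 b3 0])
      show "p < 2" "4*q < 2" "2*q+1 < 2" "(0::real) < 2" using p q by auto
      fix n :: nat assume n: "n \<ge> 1"
      define t where "t = real n"
      have t: "t > 0" "t \<ge> 1" using n unfolding t_def by auto
      define X where "X = t *\<^sub>R (1::'a)"
      have XyX: "X*y*X = (t*t) *\<^sub>R y" unfolding X_def by simp
      have XhX: "X*(f y - A y)*X = (t*t) *\<^sub>R (f y - A y)" unfolding X_def by simp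
      have JAX: "JA X y = 0" by (rule JA0)
      have dec: "X*(f y - A y)*X = (f (X*y*X) - A (X*y*X)) - (f X - A X)*y*X - X*y*(f X - A X)
          - (f (X*y*X) - f X*y*X - X*f y*X - X*y*f X) + JA X y"
        unfolding JA_def by (simp add: algebra_simps)
      have nX: "norm X = t * norm (1::'a)" unfolding X_def using t by auto
      have hX: "norm (f X - A X) \<le> K * t powr (2*q) * norm (1::'a) powr (2*q)" unfolding X_def using t by (intro hbt) auto
      have B1: "norm (f (X*y*X) - f X*y*X - X*f y*X - X*y*f X) \<le> b1 * t powr p"
      proof -
        have "norm (f (X*y*X) - f X*y*X - X*f y*X - X*y*f X) \<le> Th * norm X powr p * norm y powr p" by (rule J)
        also have "... = b1 * t powr p" unfolding X_def norm_scale_powr b1_def using t by simp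
        finally show ?thesis .
      qed
      have B2: "norm (f (X*y*X) - A (X*y*X)) \<le> b2 * t powr (4*q)"
      proof -
        have "norm (f (X*y*X) - A (X*y*X)) \<le> K * (t*t) powr (2*q) * norm y powr (2*q)"
          unfolding XyX using t by (intro hbt) auto
        also have "(t*t) powr (2*q) = t powr (4*q)"
        proof -
          have "(4::real)*q = 2*q + 2*q" by simp
          then show ?thesis using t by (simp only: powr_mult powr_add)
        qed
        finally show ?thesis unfolding b2_def by (simp add: algebra_simps)
      qed
      have tt: "t powr (2*q) * t = t powr (2*q+1)"
        using t by (simp only: powr_add) simp
      have B3: "norm ((f X - A X)*y*X) + norm (X*y*(f X - A X)) \<le> b3 * t powr (2*q+1)"
      proof -
        have "norm ((f X - A X)*y*X) \<le> (K * t powr (2*q) * norm (1::'a) powr (2*q)) * norm y * (t * norm (1::'a))"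
          using hX nX by (intro prod3_le) auto
        moreover have "norm (X*y*(f X - A X)) \<le> (t * norm (1::'a)) * norm y * (K * t powr (2*q) * norm (1::'a) powr (2*q))"
          using hX nX by (intro prod3_le) auto
        moreover have "(K * t powr (2*q) * norm (1::'a) powr (2*q)) * norm y * (t * norm (1::'a))
            + (t * norm (1::'a)) * norm y * (K * t powr (2*q) * norm (1::'a) powr (2*q)) = b3 * (t powr (2*q) * t)"
          unfolding b3_def by (simp add: algebra_simps)
        ultimately show ?thesis unfolding tt by linarith
      qed
      have "norm (X*(f y - A y)*X) \<le> b2 * t powr (4*q) + b3 * t powr (2*q+1) + b1 * t powr p"
        using norm4[of "f (X*y*X) - A (X*y*X)" "(f X - A X)*y*X" "X*y*(f X - A X)"
            "f (X*y*X) - f X*y*X - X*f y*X - X*y*f X"] B1 B2 B3 unfolding dec JAX by simp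
      moreover have "norm (X*(f y - A y)*X) = t powr 2 * norm (f y - A y)" unfolding XhX using t
        by (simp add: powr_numeral power2_eq_square)
      ultimately show "real n powr 2 * norm (f y - A y) \<le> b1 * real n powr p + b2 * real n powr (4*q)
          + b3 * real n powr (2*q+1) + 0 * real n powr 0" unfolding t_def by simp
    qed
    then show ?thesis by simp
  qed
  then show ?thesis using JA0 unfolding JA_def by (auto intro: ext)
qed

lemma scaleC_zero_left: "(0::complex) *\<^sub>C (x::'a::complex_banach_algebra_1) = 0"
proof -
  have "(0::complex) *\<^sub>C x = 0 *\<^sub>C x + 0 *\<^sub>C x" using scaleC_add_left[of 0 0 x] by simp
  then show ?thesis by simp
qed

lemma sec_from_H:
  fixes f :: "'a::complex_banach_algebra_1 \<Rightarrow> 'a"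
  assumes fadd: "\<And>x y. f (x + y) = f x + f y" and f0: "f 0 = 0"
    and H: "\<And>x y \<mu>. \<mu> \<in> circle_sector n0 \<Longrightarrow>
           norm (f ((2 * \<mu>) *\<^sub>C x + \<mu> *\<^sub>C y) + f (\<mu> *\<^sub>C x + (2 * \<mu>) *\<^sub>C y)
                 - \<mu> *\<^sub>C (f (3 *\<^sub>C x) + f (3 *\<^sub>C y)))
             \<le> \<theta> * norm x powr q * norm y powr q"
    and mu: "\<mu> \<in> circle_sector n0"
  shows "f (\<mu> *\<^sub>C z) = \<mu> *\<^sub>C f z"
proof -
  define x where "x = (1/3::complex) *\<^sub>C z"
  have "norm (f ((2 * \<mu>) *\<^sub>C x) + f (\<mu> *\<^sub>C x) - \<mu> *\<^sub>C f (3 *\<^sub>C x)) \<le> 0"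
    using H[OF mu, of x 0] by (simp add: scaleC_zero_right f0)
  then have "f ((2 * \<mu>) *\<^sub>C x) + f (\<mu> *\<^sub>C x) = \<mu> *\<^sub>C f (3 *\<^sub>C x)" by simp
  moreover have "f ((2 * \<mu>) *\<^sub>C x) + f (\<mu> *\<^sub>C x) = f ((3 * \<mu>) *\<^sub>C x)"
    by (simp add: fadd[symmetric] scaleC_add_left[symmetric])
  moreover have "(3 * \<mu>) *\<^sub>C x = \<mu> *\<^sub>C z" unfolding x_def by (simp add: scaleC_scaleC)
  moreover have "3 *\<^sub>C x = z" unfolding x_def by (simp add: scaleC_scaleC scaleC_one)
  ultimately show ?thesis by simp
qed

lemma chom:
  fixes f :: "'a::complex_banach_algebra_1 \<Rightarrow> 'a"
  assumes n0: "n0 > 0" and fadd: "\<And>x y. f (x + y) = f x + f y"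
    and sec: "\<And>\<mu> z. \<mu> \<in> circle_sector n0 \<Longrightarrow> f (\<mu> *\<^sub>C z) = \<mu> *\<^sub>C f z"
  shows "f (c *\<^sub>C z) = c *\<^sub>C f z"
proof -
  have f0: "f 0 = 0" using fadd[of 0 0] by simp
  define \<epsilon> where "\<epsilon> = 2 * pi / real n0"
  have eps: "\<epsilon> > 0" unfolding \<epsilon>_def using n0 by simp
  have cis_le: "f (cis t *\<^sub>C z) = cis t *\<^sub>C f z" if "0 \<le> t" "t \<le> \<epsilon>" for t z
    using sec[OF circle_sector_cis[of t n0]] that unfolding \<epsilon>_def by blast
  have ind: "\<forall>t z. 0 \<le> t \<and> t \<le> real k * \<epsilon> \<longrightarrow> f (cis t *\<^sub>C z) = cis t *\<^sub>C f z" for k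
  proof (induction k)
    case 0
    then show ?case by (auto simp: scaleC_one)
  next
    case (Suc k)
    show ?case
    proof (intro allI impI)
      fix t z assume t: "0 \<le> t \<and> t \<le> real (Suc k) * \<epsilon>"
      show "f (cis t *\<^sub>C z) = cis t *\<^sub>C f z"
      proof (cases "t \<le> \<epsilon>")
        case True
        then show ?thesis using t cis_le by blast
      next
        case False
        then have t2: "0 \<le> t - \<epsilon> \<and> t - \<epsilon> \<le> real k * \<epsilon>" using t by (auto simp: algebra_simps)
        have "cis t = cis \<epsilon> * cis (t - \<epsilon>)" by (simp add: cis_mult)
        then have "f (cis t *\<^sub>C z) = f (cis \<epsilon> *\<^sub>C (cis (t - \<epsilon>) *\<^sub>C z))" by (simp add: scaleC_scaleC)
        also have "... = cis \<epsilon> *\<^sub>C f (cis (t - \<epsilon>) *\<^sub>C z)" using cis_le eps by simp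
        also have "... = cis \<epsilon> *\<^sub>C (cis (t - \<epsilon>) *\<^sub>C f z)" using Suc.IH t2 by simp
        also have "... = cis t *\<^sub>C f z" by (simp add: scaleC_scaleC cis_mult)
        finally show ?thesis .
      qed
    qed
  qed
  have cpos: "f (cis t *\<^sub>C z) = cis t *\<^sub>C f z" if "0 \<le> t" for t z
  proof -
    obtain k :: nat where "t / \<epsilon> \<le> real k" using real_arch_simple by blast
    then have "t \<le> real k * \<epsilon>" using eps by (simp add: divide_le_eq)
    then show ?thesis using ind[of k] that by blast
  qed
  have rsmall: "f (complex_of_real r *\<^sub>C z) = complex_of_real r *\<^sub>C f z" if "\<bar>r\<bar> \<le> 2" for r z
  proof -
    define s where "s = arccos (r/2)"
    have s: "0 \<le> s" "s \<le> pi" "cos s = r/2" unfolding s_def using that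
      by (auto intro: arccos_lbound arccos_ubound cos_arccos)
    have eq: "complex_of_real r = cis s + cis (2*pi - s)"
      by (rule complex_eqI) (simp_all add: s cos_diff sin_diff)
    have "f (complex_of_real r *\<^sub>C z) = f (cis s *\<^sub>C z) + f (cis (2*pi - s) *\<^sub>C z)"
      unfolding eq scaleC_add_left fadd ..
    also have "... = cis s *\<^sub>C f z + cis (2*pi - s) *\<^sub>C f z" using s by (simp add: cpos)
    also have "... = complex_of_real r *\<^sub>C f z" unfolding eq scaleC_add_left ..
    finally show ?thesis .
  qed
  have fnat: "f ((of_nat m :: complex) *\<^sub>C z) = of_nat m *\<^sub>C f z" for m z
    by (induction m) (simp_all add: scaleC_zero_left f0 scaleC_add_left scaleC_one fadd)
  have freal: "f (complex_of_real r *\<^sub>C z) = complex_of_real r *\<^sub>C f z" for r z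
  proof -
    define m where "m = nat (ceiling \<bar>r\<bar>) + 1"
    have m1: "real m \<ge> 1" unfolding m_def by simp
    have "\<bar>r\<bar> \<le> real (nat \<lceil>\<bar>r\<bar>\<rceil>)" by (rule real_nat_ceiling_ge)
    then have "\<bar>r\<bar> \<le> real m" unfolding m_def by (simp only: of_nat_add of_nat_1)
    note m = m1 this
    define r' where "r' = r / real m"
    have "\<bar>r'\<bar> = \<bar>r\<bar> / real m" unfolding r'_def by simp
    also have "... \<le> 1" using m by (intro divide_le_eq_1_pos[THEN iffD2]) auto
    finally have "\<bar>r'\<bar> \<le> 1" .
    then have r': "\<bar>r'\<bar> \<le> 2" by simp
    have rr: "complex_of_real r = of_nat m * complex_of_real r'" unfolding r'_def using m by simp
    have "f (complex_of_real r *\<^sub>C z) = f (of_nat m *\<^sub>C (complex_of_real r' *\<^sub>C z))"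
      unfolding rr by (simp add: scaleC_scaleC)
    also have "... = of_nat m *\<^sub>C (complex_of_real r' *\<^sub>C f z)" by (simp add: fnat rsmall[OF r'])
    also have "... = complex_of_real r *\<^sub>C f z" unfolding rr by (simp add: scaleC_scaleC)
    finally show ?thesis .
  qed
  have cc: "c = complex_of_real (Re c) + complex_of_real (Im c) * cis (pi/2)"
    by (rule complex_eqI) simp_all
  have "f (c *\<^sub>C z) = f (complex_of_real (Re c) *\<^sub>C z + complex_of_real (Im c) *\<^sub>C (cis (pi/2) *\<^sub>C z))"
    by (subst cc) (simp add: scaleC_add_left scaleC_scaleC)
  also have "... = complex_of_real (Re c) *\<^sub>C f z + complex_of_real (Im c) *\<^sub>C (cis (pi/2) *\<^sub>C f z)"
    using cpos[of "pi/2" z] by (simp add: fadd freal)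
  also have "... = c *\<^sub>C f z" by (subst (3) cc) (simp add: scaleC_add_left scaleC_scaleC)
  finally show ?thesis .
qed

theorem corollary2p12:
  fixes f :: "'a::complex_banach_algebra_1 \<Rightarrow> 'a"
    and n0 :: nat and p q \<theta> :: real
  assumes "n0 > 0"
    and "semiprime_ring TYPE('a)"
    and "p < 3/2" and "q < 1/2"
    and "\<And>x y. norm (f (x * y * x) - f x * y * x - x * f y * x - x * y * f x)
                 \<le> \<theta> * norm x powr p * norm y powr p"
    and "\<And>x y \<mu>. \<mu> \<in> circle_sector n0 \<Longrightarrow>
           norm (f ((2 * \<mu>) *\<^sub>C x + \<mu> *\<^sub>C y) + f (\<mu> *\<^sub>C x + (2 * \<mu>) *\<^sub>C y)
                 - \<mu> *\<^sub>C (f (3 *\<^sub>C x) + f (3 *\<^sub>C y)))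
             \<le> \<theta> * norm x powr q * norm y powr q"
  shows "linear_derivation f"
proof -
  have f0: "f 0 = 0" using assms(5)[of 0 0] by simp
  have E: "\<And>x y. norm (f (2 *\<^sub>R x + y) + f (x + 2 *\<^sub>R y) - f (3 *\<^sub>R x) - f (3 *\<^sub>R y))
      \<le> \<bar>\<theta>\<bar> * norm x powr q * norm y powr q"
    by (rule setup_E[OF assms(1) assms(6)])
  obtain A K where A: "\<forall>x y. A (x + y) = A x + A y" "0 \<le> K" "\<forall>x. norm (f x - A x) \<le> K * norm x powr (2*q)"
    using HU[OF assms(4) abs_ge_zero f0 E] by blast
  have Jb: "norm (f (x * y * x) - f x * y * x - x * f y * x - x * y * f x) \<le> \<bar>\<theta>\<bar> * norm x powr p * norm y powr p" for x y
  proof -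
    have "\<theta> * norm x powr p * norm y powr p \<le> \<bar>\<theta>\<bar> * norm x powr p * norm y powr p"
      by (intro mult_right_mono) auto
    then show ?thesis using assms(5)[of x y] by linarith
  qed
  have st: "f = A \<and> (\<forall>x y. A (x*y*x) - A x*y*x - x*A y*x - x*y*A x = 0)"
    by (rule stage2[OF assms(3) assms(4) abs_ge_zero A(2) Jb]) (use A in auto)
  have fadd: "\<And>x y. f (x + y) = f x + f y" using st A(1) by simp
  have J: "\<And>x y. f (x*y*x) = f x*y*x + x*f y*x + x*y*f x" using st by (simp add: diff_eq_eq algebra_simps)
  have sec: "\<And>\<mu> z. \<mu> \<in> circle_sector n0 \<Longrightarrow> f (\<mu> *\<^sub>C z) = \<mu> *\<^sub>C f z"
    by (rule sec_from_H[OF fadd f0 assms(6)])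
  have hom: "\<And>c z. f (c *\<^sub>C z) = c *\<^sub>C f z" by (rule chom[OF assms(1) fadd sec])
  have sp: "\<And>a::'a. (\<forall>x. a * x * a = 0) \<Longrightarrow> a = 0" using assms(2) unfolding semiprime_ring_def by blast
  have der: "\<And>x y. f (x * y) = f x * y + x * f y" by (rule jordan_triple_der[OF sp fadd J])
  show ?thesis unfolding linear_derivation_def using fadd hom der by blast
qed

end
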